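(* Consider the discrete-time $Geo^X/G_r^{(a,b)}/1$ queue with single ($\delta=0$) or multiple ($\delta=1$) vacations described in the context, with $\rho<1$. Then for all $n\ge0$ and $a\le i\le b-1$, $$p^+_{n,i}=\Big[(1-\delta)\sum_{m=0}^{a-1}Q^+_m\sum_{j=m}^{a-1}e_{j,m}g_{i-j}+\big(p^+_i+Q^+_i\big)\Big]k^{(i)}_n,$$ where $k^{(i)}_n$ is the coefficient of $x^n$ in $K^{(i)}(x)$, i.e. the probability of $n$ arriving customers during the service time of a batch of size $i$.
   Context: Time is slotted. Fix integers $1\le a\le b$, $\lambda\in(0,1)$, $\bar\lambda=1-\lambda$, and a group-size distribution $(g_m)_{m\ge1}$ with finite mean $\bar g$ and pgf $G(z)=\sum_{m\ge1}g_mz^m$; $g_m=0$ for $m\le0$. In each slot a group arrives with probability $\lambda$, with size distribution $(g_m)$. Service follows the $(a,b)$ bulk rule (start only if at least $a$ wait; take all if $a\le r\le b$ wait, exactly $b$ if more than $b$ wait). A batch of size $r$ ($a\le r\le b$) has service-time pmf $s_r(n)$, $n\ge1$, pgf $S_r^*(z)$, mean $s_r$, $\mu_b=1/s_b$. Vacation times have pmf $v_n$, $n\ge1$, pgf $V^*(z)$, finite mean. $\delta=0$: single vacation (server stays dormant after a vacation until $a$ wait); $\delta=1$: multiple vacations. $\rho=\lambda\bar g/(b\mu_b)<1$. Stationary probabilities $p_{n,0}$ ($0\le n\le a-1$, dormant), $p_{n,r}(u)$ ($n\ge0$ waiting, batch size $a\le r\le b$ in service, remaining service $u\ge1$), $Q_n(u)$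 ($n\ge0$ waiting, on vacation, remaining vacation $u\ge1$) satisfy: (E1) $p_{0,0}=(1-\delta)[\bar\lambda p_{0,0}+\bar\lambda Q_0(1)]$; (E2) $p_{n,0}=(1-\delta)[\bar\lambda p_{n,0}+\lambda\sum_{i=1}^ng_ip_{n-i,0}+\bar\lambda Q_n(1)+\lambda\sum_{i=1}^ng_iQ_{n-i}(1)]$, $1\le n\le a-1$; (E3) $p_{0,r}(u)=\bar\lambda p_{0,r}(u+1)+s_r(u)\big[\sum_{m=a}^b(\bar\lambda p_{r,m}(1)+\lambda\sum_{i=1}^rg_ip_{r-i,m}(1))+\bar\lambda Q_r(1)+\lambda\sum_{i=1}^rg_iQ_{r-i}(1)+(1-\delta)\lambda\sum_{i=0}^{a-1}g_{r-i}p_{i,0}\big]$, $a\le r\le b$; (E4) $p_{n,r}(u)=\bar\lambda p_{n,r}(u+1)+\lambda\sum_{i=1}^ng_ip_{n-i,r}(u+1)$, $n\ge1$, $a\le r\le b-1$; (E5) $p_{n,b}(u)=\bar\lambda p_{n,b}(u+1)+\lambda\sum_{i=1}^ng_ip_{n-i,b}(u+1)+s_b(u)\big[\sum_{m=a}^b(\bar\lambda p_{n+b,m}(1)+\lambda\sum_{i=1}^{n+b}g_ip_{n+b-i,m}(1))+\bar\lambda Q_{n+b}(1)+\lambda\sum_{i=1}^{n+b}g_iQ_{n+b-i}(1)+(1-\delta)\lambda\sum_{i=0}^{a-1}g_{n+b-i}p_{i,0}\big]$, $n\ge1$; (E6) $Q_0(u)=\bar\lambda Q_0(u+1)+\bar\lambda(\sum_{m=a}^bp_{0,m}(1)+\delta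 Q_0(1))v_u$; (E7) $Q_n(u)=\bar\lambda Q_n(u+1)+\lambda\sum_{i=1}^ng_iQ_{n-i}(u+1)+v_u\big[\bar\lambda(\sum_{m=a}^bp_{n,m}(1)+\delta Q_n(1))+\lambda\sum_{i=1}^ng_i(\sum_{m=a}^bp_{n-i,m}(1)+\delta Q_{n-i}(1))\big]$, $1\le n\le a-1$; (E8) $Q_n(u)=\bar\lambda Q_n(u+1)+\lambda\sum_{i=1}^ng_iQ_{n-i}(u+1)$, $n\ge a$; (N) $(1-\delta)\sum_{n=0}^{a-1}p_{n,0}+\sum_{n,r,u}p_{n,r}(u)+\sum_{n,u}Q_n(u)=1$. With $\tau=\sum_{m\ge0}\sum_{r=a}^bp_{m,r}(1)+\sum_{m\ge0}Q_m(1)$: $p^+_{0,r}=\tau^{-1}\bar\lambda p_{0,r}(1)$, $p^+_{n,r}=\tau^{-1}(\bar\lambda p_{n,r}(1)+\lambda\sum_{i=1}^ng_ip_{n-i,r}(1))$ ($n\ge1$, $a\le r\le b$) are the joint queue/server-content probabilities at service completion epochs; $p^+_n=\sum_{r=a}^bp^+_{n,r}$; $Q^+_0=\tau^{-1}\bar\lambda Q_0(1)$, $Q^+_n=\tau^{-1}(\bar\lambda Q_n(1)+\lambda\sum_{i=1}^ng_iQ_{n-i}(1))$ ($n\ge1$). $K^{(r)}(x)=S_r^*(\bar\lambda+\lambda G(x))$. $e_{n,i}$ ($0\le i\le n$): $e_{n,n}=1$, $e_{n,n-1}=g_1$, $e_{n,i}=\sum_{j=i+1}^{n-1}e_{n,j}g_{j-i}+g_{n-i}$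 for $0\le i\le n-2$. *)

theory Defs
  imports "HOL-Analysis.Analysis" "HOL-Computational_Algebra.Formal_Power_Series"
begin

text \<open>Discrete-time Geo^X/G_r^(a,b)/1 queue with single/multiple vacations.
  lam = arrival probability per slot, g = group-size pmf (g 0 = 0),
  s r = service-time pmf of a batch of size r (s r 0 = 0), v = vacation-time pmf (v 0 = 0),
  del = 0 (single vacation) or 1 (multiple vacations).
  Unknowns: p0 n (dormant, n waiting), p n r u (n waiting, batch r in service, remaining
  service u), Q n u (n waiting, on vacation, remaining vacation u).\<close>

definition arr :: "real \<Rightarrow> (nat \<Rightarrow> real) \<Rightarrow> (nat \<Rightarrow> real) \<Rightarrow> nat \<Rightarrow> real" where
  "arr lam g f n = (1 - lam) * f n + lam * (\<Sum>i=1..n. g i * f (n - i))"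

definition pmf_mean :: "(nat \<Rightarrow> real) \<Rightarrow> real" where
  "pmf_mean f = (\<Sum>n. real n * f n)"

definition pos_pmf :: "(nat \<Rightarrow> real) \<Rightarrow> bool" where
  "pos_pmf f \<longleftrightarrow> f 0 = 0 \<and> (\<forall>n. f n \<ge> 0) \<and> f sums 1 \<and> summable (\<lambda>n. real n * f n)"

definition balance_eqs ::
  "real \<Rightarrow> (nat \<Rightarrow> real) \<Rightarrow> (nat \<Rightarrow> nat \<Rightarrow> real) \<Rightarrow> (nat \<Rightarrow> real) \<Rightarrow> nat \<Rightarrow> nat \<Rightarrow> real
   \<Rightarrow> (nat \<Rightarrow> real) \<Rightarrow> (nat \<Rightarrow> nat \<Rightarrow> nat \<Rightarrow> real) \<Rightarrow> (nat \<Rightarrow> nat \<Rightarrow> real) \<Rightarrow> bool" where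
  "balance_eqs lam g s v a b del p0 p Q \<longleftrightarrow>
    \<comment> \<open>(E1)\<close>
    p0 0 = (1 - del) * ((1 - lam) * p0 0 + (1 - lam) * Q 0 1) \<and>
    \<comment> \<open>(E2)\<close>
    (\<forall>n. 1 \<le> n \<and> n \<le> a - 1 \<longrightarrow>
       p0 n = (1 - del) * (arr lam g p0 n + arr lam g (\<lambda>k. Q k 1) n)) \<and>
    \<comment> \<open>(E3)\<close>
    (\<forall>r u. a \<le> r \<and> r \<le> b \<and> 1 \<le> u \<longrightarrow>
       p 0 r u = (1 - lam) * p 0 r (u + 1) + s r u *
         ((\<Sum>m=a..b. arr lam g (\<lambda>k. p k m 1) r) + arr lam g (\<lambda>k. Q k 1) r
          + (1 - del) * lam * (\<Sum>i=0..a-1. g (r - i) * p0 i))) \<and>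
    \<comment> \<open>(E4)\<close>
    (\<forall>n r u. 1 \<le> n \<and> a \<le> r \<and> r \<le> b - 1 \<and> 1 \<le> u \<longrightarrow>
       p n r u = arr lam g (\<lambda>k. p k r (u + 1)) n) \<and>
    \<comment> \<open>(E5)\<close>
    (\<forall>n u. 1 \<le> n \<and> 1 \<le> u \<longrightarrow>
       p n b u = arr lam g (\<lambda>k. p k b (u + 1)) n + s b u *
         ((\<Sum>m=a..b. arr lam g (\<lambda>k. p k m 1) (n + b)) + arr lam g (\<lambda>k. Q k 1) (n + b)
          + (1 - del) * lam * (\<Sum>i=0..a-1. g (n + b - i) * p0 i))) \<and>
    \<comment> \<open>(E6)\<close>
    (\<forall>u. 1 \<le> u \<longrightarrow>
       Q 0 u = (1 - lam) * Q 0 (u + 1) + (1 - lam) * ((\<Sum>m=a..b. p 0 m 1) + del * Q 0 1) * v u) \<and>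
    \<comment> \<open>(E7)\<close>
    (\<forall>n u. 1 \<le> n \<and> n \<le> a - 1 \<and> 1 \<le> u \<longrightarrow>
       Q n u = arr lam g (\<lambda>k. Q k (u + 1)) n
               + v u * arr lam g (\<lambda>k. (\<Sum>m=a..b. p k m 1) + del * Q k 1) n) \<and>
    \<comment> \<open>(E8)\<close>
    (\<forall>n u. a \<le> n \<and> 1 \<le> u \<longrightarrow> Q n u = arr lam g (\<lambda>k. Q k (u + 1)) n)"

definition tau :: "(nat \<Rightarrow> nat \<Rightarrow> nat \<Rightarrow> real) \<Rightarrow> (nat \<Rightarrow> nat \<Rightarrow> real) \<Rightarrow> nat \<Rightarrow> nat \<Rightarrow> real" where
  "tau p Q a b = (\<Sum>\<^sub>\<infinity>(m, r)\<in>UNIV \<times> {a..b}. p m r 1) + (\<Sum>\<^sub>\<infinity>m\<in>UNIV. Q m 1)"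

text \<open>p^+_{n,r} (the n = 0 case is the same formula with an empty sum).\<close>
definition pplus :: "real \<Rightarrow> (nat \<Rightarrow> real) \<Rightarrow> (nat \<Rightarrow> nat \<Rightarrow> nat \<Rightarrow> real) \<Rightarrow> (nat \<Rightarrow> nat \<Rightarrow> real)
    \<Rightarrow> nat \<Rightarrow> nat \<Rightarrow> nat \<Rightarrow> nat \<Rightarrow> real" where
  "pplus lam g p Q a b n r = arr lam g (\<lambda>k. p k r 1) n / tau p Q a b"

definition pplus_tot :: "real \<Rightarrow> (nat \<Rightarrow> real) \<Rightarrow> (nat \<Rightarrow> nat \<Rightarrow> nat \<Rightarrow> real) \<Rightarrow> (nat \<Rightarrow> nat \<Rightarrow> real)
    \<Rightarrow> nat \<Rightarrow> nat \<Rightarrow> nat \<Rightarrow> real" where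
  "pplus_tot lam g p Q a b n = (\<Sum>r=a..b. pplus lam g p Q a b n r)"

definition Qplus :: "real \<Rightarrow> (nat \<Rightarrow> real) \<Rightarrow> (nat \<Rightarrow> nat \<Rightarrow> nat \<Rightarrow> real) \<Rightarrow> (nat \<Rightarrow> nat \<Rightarrow> real)
    \<Rightarrow> nat \<Rightarrow> nat \<Rightarrow> nat \<Rightarrow> real" where
  "Qplus lam g p Q a b n = arr lam g (\<lambda>k. Q k 1) n / tau p Q a b"

text \<open>e_{n,i}: e_{n,n} = 1, e_{n,n-1} = g_1, e_{n,i} = sum_{j=i+1}^{n-1} e_{n,j} g_{j-i} + g_{n-i}
  (the second clause is the i = n-1 instance of the third). Set to 0 for i > n (not used).\<close>
function ecoef :: "(nat \<Rightarrow> real) \<Rightarrow> nat \<Rightarrow> nat \<Rightarrow> real" where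
  "ecoef g n i = (if i = n then 1 else if n < i then 0
                  else (\<Sum>j\<in>{i+1..<n}. ecoef g n j * g (j - i)) + g (n - i))"
  by auto
termination by (relation "Wellfounded.measure (\<lambda>(g, n, i). n - i)") auto

text \<open>k^{(i)}_n = coefficient of x^n in K^{(i)}(x) = S_i^*(1 - lam + lam G(x))
   = sum_u s_i(u) [x^n] (1 - lam + lam G(x))^u.\<close>
definition kcoef :: "real \<Rightarrow> (nat \<Rightarrow> real) \<Rightarrow> (nat \<Rightarrow> nat \<Rightarrow> real) \<Rightarrow> nat \<Rightarrow> nat \<Rightarrow> real" where
  "kcoef lam g s i n =
     (\<Sum>u. s i u * fps_nth ((fps_const (1 - lam) + fps_const lam * Abs_fps g) ^ u) n)"

end

theory Submission
  imports Defs
begin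
no_notation vec_nth (infixl \<open>$\<close> 90)
notation fps_nth (infixl \<open>$\<close> 75)
declare ecoef.simps[simp del]

abbreviation FF :: "real \<Rightarrow> (nat \<Rightarrow> real) \<Rightarrow> real fps" where
  "FF lam g \<equiv> fps_const (1 - lam) + fps_const lam * Abs_fps g"

lemma FF_nth: "FF lam g $ k = (if k = 0 then 1 - lam else 0) + lam * g k"
  by simp

lemma arr_fps:
  assumes "g 0 = 0"
  shows "arr lam g f n = (FF lam g * Abs_fps f) $ n"
proof -
  have "(FF lam g * Abs_fps f) $ n = (\<Sum>i=0..n. ((if i = 0 then 1 - lam else 0) + lam * g i) * f (n - i))"
    by (simp only: fps_mult_nth FF_nth fps_nth_Abs_fps)
  also have "\<dots> = (\<Sum>i=0..n. (if i = 0 then 1 - lam else 0) * f (n - i)) + lam * (\<Sum>i=0..n. g i * f (n - i))"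
    by (simp add: algebra_simps sum.distrib sum_distrib_left)
  also have "(\<Sum>i=0..n. g i * f (n - i)) = (\<Sum>i=1..n. g i * f (n - i))"
    using assms by (simp add: sum.atLeast_Suc_atMost)
  also have "(\<Sum>i=0..n. (if i = 0 then 1 - lam else 0) * f (n - i)) = (1 - lam) * f n"
    by (simp add: sum.atLeast_Suc_atMost)
  finally show ?thesis by (simp add: arr_def)
qed

lemma iter_fps:
  fixes F :: "'a::comm_ring_1 fps"
  assumes "\<And>u. 1 \<le> u \<Longrightarrow> P u = F * P (u+1) + fps_const (c u)"
  shows "1 \<le> u \<Longrightarrow> F * P u = (\<Sum>k<K. fps_const (c (u+k)) * F^(k+1)) + F^(K+1) * P (u+K)"
proof (induction K)
  case 0 then show ?case by simp
next
  case (Suc K)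
  have "F^(K+1) * P (u+K) = F^(K+2) * P (u + Suc K) + fps_const (c (u+K)) * F^(K+1)"
    using assms[of "u+K"] Suc.prems by (simp add: algebra_simps)
  then show ?case using Suc by (simp add: algebra_simps)
qed

lemma FF_nonneg:
  assumes "0 \<le> lam" "lam \<le> 1" "\<And>k. g k \<ge> 0"
  shows "0 \<le> (FF lam g ^ j) $ m"
proof (induction j arbitrary: m)
  case 0 then show ?case by simp
next
  case (Suc j)
  have "\<And>k. 0 \<le> FF lam g $ k" using assms by simp
  then show ?case using Suc by (simp add: fps_mult_nth sum_nonneg)
qed

lemma FF_le1:
  assumes "0 \<le> lam" "lam \<le> 1" "\<And>k. g k \<ge> 0" "g sums 1" "g 0 = 0"
  shows "(FF lam g ^ j) $ m \<le> 1"
proof -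
  define O1 :: "real fps" where "O1 = Abs_fps (\<lambda>_. 1)"
  have Fnn: "\<And>k. 0 \<le> FF lam g $ k" using assms by simp
  have FO: "(FF lam g * O1) $ n \<le> 1" for n
  proof -
    have "(FF lam g * O1) $ n = arr lam g (\<lambda>_. 1) n" using arr_fps[where g=g and lam=lam, OF assms(5)] by (simp add: O1_def)
    also have "\<dots> = (1 - lam) + lam * (\<Sum>i=1..n. g i)" by (simp add: arr_def)
    also have "(\<Sum>i=1..n. g i) \<le> 1"
    proof -
      have "(\<Sum>i=1..n. g i) \<le> (\<Sum>i<Suc n. g i)"
        by (rule sum_mono2) (use assms in auto)
      also have "\<dots> \<le> suminf g" using assms by (intro sum_le_suminf) (auto simp: sums_summable)
      finally show ?thesis using assms(4) sums_unique by fastforce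
    qed
    hence "lam * (\<Sum>i=1..n. g i) \<le> lam" using assms by (simp add: mult_left_le)
    finally show ?thesis by simp
  qed
  have H: "0 \<le> (FF lam g ^ j * O1) $ n \<and> (FF lam g ^ j * O1) $ n \<le> 1" for n
  proof (induction j arbitrary: n)
    case 0 then show ?case by (simp add: O1_def)
  next
    case (Suc j)
    have e: "FF lam g ^ Suc j * O1 = FF lam g * (FF lam g ^ j * O1)" by (simp add: algebra_simps)
    have "(FF lam g * (FF lam g ^ j * O1)) $ n = (\<Sum>i=0..n. FF lam g $ i * (FF lam g ^ j * O1) $ (n - i))"
      by (rule fps_mult_nth)
    also have "\<dots> \<le> (\<Sum>i=0..n. FF lam g $ i * 1)"
      by (intro sum_mono mult_left_mono) (use Suc Fnn in auto)
    also have "\<dots> = (FF lam g * O1) $ n" by (simp add: fps_mult_nth O1_def)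
    finally have "(FF lam g * (FF lam g ^ j * O1)) $ n \<le> 1" using FO[of n] by linarith
    moreover have "0 \<le> (FF lam g * (FF lam g ^ j * O1)) $ n"
      unfolding fps_mult_nth[of "FF lam g" "FF lam g ^ j * O1"] using Suc Fnn by (intro sum_nonneg mult_nonneg_nonneg) auto
    ultimately show ?case using e by (simp only:)
  qed
  have "(FF lam g ^ j) $ m \<le> (\<Sum>i=0..m. (FF lam g ^ j) $ i)"
    by (rule member_le_sum) (use FF_nonneg[OF assms(1-3)] in auto)
  also have "\<dots> = (FF lam g ^ j * O1) $ m" by (simp add: fps_mult_nth O1_def)
  finally show ?thesis using H[of m] by linarith
qed

lemma ecoef_unf: "ecoef g n i = (if i = n then 1 else if n < i then 0
                  else (\<Sum>j\<in>{i+1..<n}. ecoef g n j * g (j - i)) + g (n - i))"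
  by (rule ecoef.simps)

lemma ecoef_gt: "n < i \<Longrightarrow> ecoef g n i = 0"
  by (subst ecoef_unf) simp

lemma ecoef_diag[simp]: "ecoef g n n = 1"
  by (subst ecoef_unf) simp

lemma ecoef_shift_aux: "\<forall>n m. n - m = d \<and> m \<le> n \<longrightarrow> ecoef g n m = ecoef g d 0"
proof (induction d rule: less_induct)
  case (less d)
  show ?case
  proof (intro allI impI)
    fix n m assume nm: "n - m = d \<and> m \<le> n"
    show "ecoef g n m = ecoef g d 0"
    proof (cases "m = n")
      case True then show ?thesis using nm by (simp add: ecoef_unf[of g n m] ecoef_unf[of g 0 0])
    next
      case False
      hence mn: "m < n" "0 < d" using nm by auto
      have "ecoef g n m = (\<Sum>j\<in>{m+1..<n}. ecoef g n j * g (j - m)) + g (n - m)"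
        using mn by (simp add: ecoef_unf[of g n m])
      also have "(\<Sum>j\<in>{m+1..<n}. ecoef g n j * g (j - m)) = (\<Sum>j\<in>{1+m..<d+m}. ecoef g n j * g (j - m))"
        using nm by (intro sum.cong) auto
      also have "\<dots> = (\<Sum>j\<in>{1..<d}. ecoef g n (j + m) * g j)"
        by (subst sum.shift_bounds_nat_ivl) simp
      also have "\<dots> = (\<Sum>j\<in>{1..<d}. ecoef g d j * g j)"
      proof (intro sum.cong refl)
        fix j assume j: "j \<in> {1..<d}"
        have lt: "d - j < d" using j by auto
        have "ecoef g n (j + m) = ecoef g (d - j) 0"
          by (rule less.IH[OF lt, rule_format]) (use j nm in auto)
        moreover have "ecoef g d j = ecoef g (d - j) 0"
          by (rule less.IH[OF lt, rule_format]) (use j nm in auto)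
        ultimately show "ecoef g n (j + m) * g j = ecoef g d j * g j" by simp
      qed
      also have "(\<Sum>j\<in>{1..<d}. ecoef g d j * g j) + g (n - m) = ecoef g d 0"
        using mn nm by (simp add: ecoef_unf[of g d 0])
      finally show ?thesis .
    qed
  qed
qed

lemma ecoef_shift: "m \<le> n \<Longrightarrow> ecoef g n m = ecoef g (n - m) 0"
  using ecoef_shift_aux by blast

lemma ecoef_rec:
  assumes "m \<le> n"
  shows "ecoef g n m = (if m = n then 1 else 0) + (\<Sum>l=1..n. g l * ecoef g (n - l) m)"
proof (cases "m = n")
  case True
  have "(\<Sum>l=1..n. g l * ecoef g (n - l) m) = 0"
    using True by (intro sum.neutral) (auto simp: ecoef_gt)
  then show ?thesis using True by (simp add: ecoef_unf[of g n n])
next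
  case False
  hence mn: "m < n" using assms by simp
  define d where "d = n - m"
  have "ecoef g n m = (\<Sum>j\<in>{m+1..<n}. ecoef g n j * g (j - m)) + g (n - m)"
    using mn by (simp add: ecoef_unf[of g n m])
  also have "\<dots> = (\<Sum>j\<in>{m+1..n}. ecoef g n j * g (j - m))"
    using mn by (simp add: sum.last_plus ecoef_unf[of g n n] atLeastLessThanSuc_atLeastAtMost[symmetric] del: atLeastLessThanSuc_atLeastAtMost)
  also have "\<dots> = (\<Sum>j\<in>{1+m..d+m}. ecoef g n j * g (j - m))"
    using mn by (intro sum.cong) (auto simp: d_def)
  also have "\<dots> = (\<Sum>l\<in>{1..d}. ecoef g n (l + m) * g l)"
    by (subst sum.shift_bounds_cl_nat_ivl) simp
  also have "\<dots> = (\<Sum>l\<in>{1..d}. g l * ecoef g (n - l) m)"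
  proof (intro sum.cong refl)
    fix l assume l: "l \<in> {1..d}"
    have "ecoef g n (l + m) = ecoef g (n - l) m"
    proof -
      have h1: "l + m \<le> n" "m \<le> n - l" using l mn by (auto simp: d_def)
      have "n - l - m = n - (l + m)" by simp
      then show ?thesis using ecoef_shift[OF h1(1), of g] ecoef_shift[OF h1(2), of g] by metis
    qed
    then show "ecoef g n (l + m) * g l = g l * ecoef g (n - l) m" by simp
  qed
  also have "\<dots> = (\<Sum>l\<in>{1..n}. g l * ecoef g (n - l) m)"
  proof -
    have "{1..n} = {1..d} \<union> {d+1..n}" using mn by (auto simp: d_def)
    moreover have "(\<Sum>l\<in>{d+1..n}. g l * ecoef g (n - l) m) = 0"
      by (intro sum.neutral) (auto simp: d_def ecoef_gt)
    ultimately show ?thesis by (simp add: sum.union_disjoint)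
  qed
  finally show ?thesis using False by simp
qed

lemma triangle_swap:
  fixes N :: nat shows "(\<Sum>j=0..N. \<Sum>m=0..j. h j m) = (\<Sum>m=0..N. \<Sum>j=m..N. (h j m :: real))"
proof (induction N)
  case 0 then show ?case by simp
next
  case (Suc N)
  have "(\<Sum>m=0..Suc N. \<Sum>j=m..Suc N. h j m) = (\<Sum>m=0..N. \<Sum>j=m..Suc N. h j m) + h (Suc N) (Suc N)"
    by simp
  also have "(\<Sum>m=0..N. \<Sum>j=m..Suc N. h j m) = (\<Sum>m=0..N. (\<Sum>j=m..N. h j m) + h (Suc N) m)"
    by (intro sum.cong refl) simp
  also have "\<dots> = (\<Sum>m=0..N. \<Sum>j=m..N. h j m) + (\<Sum>m=0..N. h (Suc N) m)"
    by (simp add: sum.distrib)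
  finally show ?case using Suc by simp
qed

lemma p0_ecoef:
  fixes lam :: real and n N :: nat and p0 q g :: "nat \<Rightarrow> real"
  assumes h: "\<And>n. n \<le> N \<Longrightarrow> lam * p0 n = lam * (\<Sum>l=1..n. g l * p0 (n - l)) + q n"
  shows "n \<le> N \<Longrightarrow> lam * p0 n = (\<Sum>m=0..n. ecoef g n m * q m)"
proof (induction n rule: less_induct)
  case (less n)
  have "lam * p0 n = (\<Sum>l=1..n. g l * (lam * p0 (n - l))) + q n"
    using h[OF less.prems] by (simp add: sum_distrib_left algebra_simps)
  also have "\<dots> = (\<Sum>l=1..n. g l * (\<Sum>m=0..n - l. ecoef g (n - l) m * q m)) + q n"
    using less by (intro arg_cong2[where f="(+)"] sum.cong refl) auto
  also have "(\<Sum>l=1..n. g l * (\<Sum>m=0..n - l. ecoef g (n - l) m * q m))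
     = (\<Sum>l=1..n. g l * (\<Sum>m=0..n. ecoef g (n - l) m * q m))"
  proof (intro sum.cong refl)
    fix l assume "l \<in> {1..n}"
    have "{0..n} = {0..n-l} \<union> {n-l+1..n}" by auto
    moreover have "(\<Sum>m=n-l+1..n. ecoef g (n - l) m * q m) = 0"
      by (intro sum.neutral) (auto simp: ecoef_gt)
    ultimately have "(\<Sum>m=0..n - l. ecoef g (n - l) m * q m) = (\<Sum>m=0..n. ecoef g (n - l) m * q m)"
      by (simp add: sum.union_disjoint)
    then show "g l * (\<Sum>m=0..n - l. ecoef g (n - l) m * q m) = g l * (\<Sum>m=0..n. ecoef g (n - l) m * q m)"
      by simp
  qed
  also have "\<dots> = (\<Sum>m=0..n. q m * (\<Sum>l=1..n. g l * ecoef g (n - l) m))"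
  proof -
    have "(\<Sum>l=1..n. g l * (\<Sum>m=0..n. ecoef g (n - l) m * q m)) = (\<Sum>l=1..n. \<Sum>m=0..n. g l * ecoef g (n - l) m * q m)"
      by (simp add: sum_distrib_left mult.assoc)
    also have "\<dots> = (\<Sum>m=0..n. \<Sum>l=1..n. g l * ecoef g (n - l) m * q m)"
      by (rule sum.swap)
    also have "\<dots> = (\<Sum>m=0..n. q m * (\<Sum>l=1..n. g l * ecoef g (n - l) m))"
      by (intro sum.cong refl) (simp add: sum_distrib_left algebra_simps)
    finally show ?thesis .
  qed
  also have "\<dots> + q n = (\<Sum>m=0..n. ecoef g n m * q m)"
  proof -
    have "(\<Sum>m=0..n. ecoef g n m * q m) = (\<Sum>m=0..n. (if m = n then q m else 0) + q m * (\<Sum>l=1..n. g l * ecoef g (n - l) m))"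
      by (intro sum.cong refl) (subst ecoef_rec, auto simp: algebra_simps)
    also have "\<dots> = q n + (\<Sum>m=0..n. q m * (\<Sum>l=1..n. g l * ecoef g (n - l) m))"
      by (simp add: sum.distrib)
    finally show ?thesis by simp
  qed
  finally show ?case .
qed

lemma series_part:
  fixes lam :: real
  assumes lam: "0 < lam" "lam < 1" and g0: "g 0 = 0" and gnn: "\<And>k. g k \<ge> 0" and gs: "g sums 1"
    and s0: "s i 0 = 0" and snn: "\<And>u. s i u \<ge> 0" and ss: "summable (s i)"
    and rec0: "\<And>u. 1 \<le> u \<Longrightarrow> p 0 i u = (1 - lam) * p 0 i (u + 1) + s i u * C"
    and recn: "\<And>k u. 1 \<le> k \<Longrightarrow> 1 \<le> u \<Longrightarrow> p k i u = arr lam g (\<lambda>k. p k i (u + 1)) k"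
    and lim: "\<And>j. (\<lambda>K. p j i (Suc K)) \<longlonglongrightarrow> 0"
    and pnn: "\<And>j u. p j i u \<ge> 0"
  shows "arr lam g (\<lambda>k. p k i 1) n = C * kcoef lam g s i n"
proof -
  define F where "F = FF lam g"
  define P where "P u = Abs_fps (\<lambda>k. p k i u)" for u
  have rec: "P u = F * P (u+1) + fps_const (s i u * C)" if u: "1 \<le> u" for u
  proof (rule fps_ext)
    fix k
    have A: "(F * P (u+1)) $ k = arr lam g (\<lambda>k. p k i (u + 1)) k"
      using arr_fps[where g=g and lam=lam, OF g0] by (simp add: F_def P_def)
    show "P u $ k = (F * P (u + 1) + fps_const (s i u * C)) $ k"
    proof (cases "k = 0")
      case True then show ?thesis using A rec0[OF u] by (simp add: P_def arr_def F_def)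
    next
      case False then show ?thesis using A recn[OF _ u, of k] by (simp add: P_def)
    qed
  qed
  have it: "F * P 1 = (\<Sum>k<K. fps_const (s i (1+k) * C) * F^(k+1)) + F^(K+1) * P (1+K)" for K
    using iter_fps[where P=P and F=F and c="\<lambda>u. s i u * C", OF rec, where u=1 and K=K] by simp
  define L where "L = arr lam g (\<lambda>k. p k i 1) n"
  have L: "L = (F * P 1) $ n"
    using arr_fps[where g=g and lam=lam, OF g0] by (simp add: L_def F_def P_def)
  define R where "R K = (F^(K+1) * P (1+K)) $ n" for K
  define f where "f u = s i u * (F ^ u) $ n" for u
  have Fb: "0 \<le> (F ^ j) $ m" "(F ^ j) $ m \<le> 1" for j m
    unfolding F_def using FF_nonneg[of lam g j m] FF_le1[of lam g j m] lam gnn gs g0 by auto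
  have eqK: "L = C * (\<Sum>u<Suc K. f u) + R K" for K
  proof -
    have "L = (\<Sum>k<K. s i (1+k) * C * (F^(k+1)) $ n) + R K"
      unfolding L R_def by (subst it[of K]) (simp add: fps_sum_nth)
    also have "(\<Sum>k<K. s i (1+k) * C * (F^(k+1)) $ n) = C * (\<Sum>u<Suc K. f u)"
      by (simp add: sum.lessThan_Suc_shift f_def s0 sum_distrib_left algebra_simps del: sum.lessThan_Suc)
    finally show ?thesis .
  qed
  have R0: "R \<longlonglongrightarrow> 0"
  proof (rule tendsto_sandwich[of "\<lambda>_. 0" _ _ "\<lambda>K. \<Sum>m=0..n. p (n - m) i (1 + K)"])
    show "\<forall>\<^sub>F K in sequentially. 0 \<le> R K"
      unfolding R_def P_def fps_mult_nth fps_nth_Abs_fps by (intro always_eventually allI sum_nonneg mult_nonneg_nonneg Fb pnn)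
    show "\<forall>\<^sub>F K in sequentially. R K \<le> (\<Sum>m=0..n. p (n - m) i (1 + K))"
      unfolding R_def P_def fps_mult_nth fps_nth_Abs_fps
      by (intro always_eventually allI sum_mono mult_left_le_one_le Fb pnn)
    show "(\<lambda>K. \<Sum>m=0..n. p (n - m) i (1 + K)) \<longlonglongrightarrow> 0"
      using lim by (intro tendsto_null_sum) simp
  qed simp
  have sf: "summable f"
  proof (rule summable_comparison_test[OF _ ss])
    show "\<exists>N. \<forall>u\<ge>N. norm (f u) \<le> s i u"
      using Fb snn by (auto simp: f_def abs_mult intro!: mult_left_le)
  qed
  have t1: "(\<lambda>K. C * (\<Sum>u<Suc K. f u)) \<longlonglongrightarrow> L"
  proof -
    have "(\<lambda>K. L - R K) \<longlonglongrightarrow> L - 0" by (intro tendsto_diff tendsto_const R0)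
    moreover have "(\<lambda>K. L - R K) = (\<lambda>K. C * (\<Sum>u<Suc K. f u))" using eqK by (auto simp: algebra_simps)
    ultimately show ?thesis by simp
  qed
  have t2: "(\<lambda>K. C * (\<Sum>u<Suc K. f u)) \<longlonglongrightarrow> C * suminf f"
    by (intro tendsto_mult_left LIMSEQ_Suc summable_LIMSEQ sf)
  have "L = C * suminf f" using LIMSEQ_unique[OF t1 t2] .
  moreover have "suminf f = kcoef lam g s i n" unfolding kcoef_def f_def[abs_def] F_def by simp
  ultimately show ?thesis by (simp add: L_def)
qed

lemma fin_alg:
  fixes d X Y Z k T :: real
  shows "(d * X + Y + Z) * k / T = (d * (X / T) + (Y / T + Z / T)) * k"
  by (cases "T = 0") (simp_all add: field_simps)

theorem mainTheorem5:
  fixes lam del :: real and a b :: nat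
    and g v :: "nat \<Rightarrow> real" and s :: "nat \<Rightarrow> nat \<Rightarrow> real"
    and p0 :: "nat \<Rightarrow> real" and p :: "nat \<Rightarrow> nat \<Rightarrow> nat \<Rightarrow> real" and Q :: "nat \<Rightarrow> nat \<Rightarrow> real"
  assumes ab: "1 \<le> a" "a \<le> b"
    and lam: "0 < lam" "lam < 1"
    and g: "pos_pmf g"
    and s: "\<And>r. a \<le> r \<Longrightarrow> r \<le> b \<Longrightarrow> pos_pmf (s r)"
    and v: "pos_pmf v"
    and del: "del = 0 \<or> del = 1"
    and rho: "lam * pmf_mean g / (real b * (1 / pmf_mean (s b))) < 1"
    and nonneg: "\<And>n. p0 n \<ge> 0" "\<And>n r u. p n r u \<ge> 0" "\<And>n u. Q n u \<ge> 0"
    and bal: "balance_eqs lam g s v a b del p0 p Q"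
    and summ_p: "(\<lambda>(n, r, u). p n r u) summable_on (UNIV \<times> {a..b} \<times> {1..})"
    and summ_Q: "(\<lambda>(n, u). Q n u) summable_on (UNIV \<times> {1..})"
    and norm: "(1 - del) * (\<Sum>n=0..a-1. p0 n)
               + (\<Sum>\<^sub>\<infinity>(n, r, u)\<in>UNIV \<times> {a..b} \<times> {1..}. p n r u)
               + (\<Sum>\<^sub>\<infinity>(n, u)\<in>UNIV \<times> {1..}. Q n u) = 1"
  shows "\<forall>n i. a \<le> i \<and> i \<le> b - 1 \<longrightarrow>
    pplus lam g p Q a b n i =
      ((1 - del) * (\<Sum>m=0..a-1. Qplus lam g p Q a b m * (\<Sum>j=m..a-1. ecoef g j m * g (i - j)))
       + (pplus_tot lam g p Q a b i + Qplus lam g p Q a b i)) * kcoef lam g s i n"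
proof (intro allI impI)
  fix n i assume ii: "a \<le> i \<and> i \<le> b - 1"
  have i1: "a \<le> i" "i \<le> b" using ii ab by auto
  note E = bal[unfolded balance_eqs_def]
  note E1 = E[THEN conjunct1]
  note E2 = E[THEN conjunct2, THEN conjunct1]
  note E3 = E[THEN conjunct2, THEN conjunct2, THEN conjunct1]
  note E4 = E[THEN conjunct2, THEN conjunct2, THEN conjunct2, THEN conjunct1]
  have g0: "g 0 = 0" and gnn: "\<And>k. g k \<ge> 0" and gs: "g sums 1"
    using g by (auto simp: pos_pmf_def)
  have s0: "s i 0 = 0" and snn: "\<And>u. s i u \<ge> 0" and ss: "summable (s i)"
    using s[OF i1] by (auto simp: pos_pmf_def sums_summable)
  define q where "q m = arr lam g (\<lambda>k. Q k 1) m" for m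
  define C where "C = (\<Sum>m=a..b. arr lam g (\<lambda>k. p k m 1) i) + arr lam g (\<lambda>k. Q k 1) i
          + (1 - del) * lam * (\<Sum>j=0..a-1. g (i - j) * p0 j)"
  have lim: "(\<lambda>K. p j i (Suc K)) \<longlonglongrightarrow> 0" for j
  proof -
    have "(\<lambda>(n, r, u). p n r u) summable_on ((\<lambda>u. (j, i, Suc u)) ` UNIV)"
      by (rule summable_on_subset_banach[OF summ_p]) (use i1 in auto)
    hence "((\<lambda>(n, r, u). p n r u) \<circ> (\<lambda>u. (j, i, Suc u))) summable_on UNIV"
      by (subst (asm) summable_on_reindex) (auto simp: inj_on_def)
    hence "(\<lambda>u. p j i (Suc u)) summable_on UNIV" by (simp add: o_def)
    hence "summable (\<lambda>u. p j i (Suc u))"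
      using summable_on_UNIV_nonneg_real_iff[of "\<lambda>u. p j i (Suc u)"] nonneg(2) by blast
    then show ?thesis by (rule summable_LIMSEQ_zero)
  qed
  have key: "arr lam g (\<lambda>k. p k i 1) n = C * kcoef lam g s i n"
  proof (rule series_part[where lam=lam and g=g and s=s and i=i and p=p and C=C and n=n, OF lam g0 gnn gs s0 snn ss _ _ lim nonneg(2)])
    fix u :: nat assume u: "1 \<le> u"
    show "p 0 i u = (1 - lam) * p 0 i (u + 1) + s i u * C"
      unfolding C_def by (rule E3[rule_format]) (use i1 u in auto)
  next
    fix k u :: nat assume ku: "1 \<le> k" "1 \<le> u"
    show "p k i u = arr lam g (\<lambda>k. p k i (u + 1)) k"
      by (rule E4[rule_format]) (use ii ku in auto)
  qed
  define Ee where "Ee m = (\<Sum>j=m..a-1. ecoef g j m * g (i - j))" for m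
  have P0: "(1 - del) * lam * (\<Sum>j=0..a-1. g (i - j) * p0 j) = (1 - del) * (\<Sum>m=0..a-1. q m * Ee m)"
  proof (cases "del = 1")
    case True then show ?thesis by simp
  next
    case False
    hence d0: "del = 0" using del by simp
    have h: "lam * p0 n = lam * (\<Sum>l=1..n. g l * p0 (n - l)) + q n" if "n \<le> a - 1" for n
    proof (cases "n = 0")
      case True
      have e1: "p0 0 = (1 - 0) * ((1 - lam) * p0 0 + (1 - lam) * Q 0 1)" using E1 d0 by metis
      have q0: "q 0 = (1 - lam) * Q 0 1" by (simp add: q_def arr_def)
      have z: "(\<Sum>l=1..0. g l * p0 (0 - l)) = 0" by simp
      show ?thesis unfolding True z q0 using e1 by algebra
    next
      case False
      have e2: "p0 n = (1 - 0) * (arr lam g p0 n + arr lam g (\<lambda>k. Q k 1) n)"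
        using E2[rule_format, of n] d0 that False by auto
      show ?thesis using e2 unfolding q_def arr_def by algebra
    qed
    have "lam * (\<Sum>j=0..a-1. g (i - j) * p0 j) = (\<Sum>j=0..a-1. g (i - j) * (lam * p0 j))"
      by (simp add: sum_distrib_left algebra_simps)
    also have "\<dots> = (\<Sum>j=0..a-1. \<Sum>m=0..j. g (i - j) * (ecoef g j m * q m))"
      using p0_ecoef[of "a-1" lam p0 g q, OF h] by (simp add: sum_distrib_left)
    also have "\<dots> = (\<Sum>m=0..a-1. \<Sum>j=m..a-1. g (i - j) * (ecoef g j m * q m))"
      by (rule triangle_swap)
    also have "\<dots> = (\<Sum>m=0..a-1. q m * Ee m)"
      by (simp add: Ee_def sum_distrib_left algebra_simps)
    finally show ?thesis by simp
  qed
  define T where "T = tau p Q a b"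
  have L: "pplus lam g p Q a b n i = C * kcoef lam g s i n / T"
    using key by (simp add: pplus_def T_def)
  have R1: "(\<Sum>m=0..a-1. Qplus lam g p Q a b m * Ee m) = (\<Sum>m=0..a-1. q m * Ee m) / T"
    by (simp add: Qplus_def q_def T_def sum_divide_distrib)
  have R2: "pplus_tot lam g p Q a b i = (\<Sum>m=a..b. arr lam g (\<lambda>k. p k m 1) i) / T"
    by (simp add: pplus_tot_def pplus_def T_def sum_divide_distrib)
  have R3: "Qplus lam g p Q a b i = q i / T" by (simp add: Qplus_def q_def T_def)
  have CC: "C = (1 - del) * (\<Sum>m=0..a-1. q m * Ee m) + (\<Sum>m=a..b. arr lam g (\<lambda>k. p k m 1) i) + q i"
    using P0 by (simp add: C_def q_def)
  show "pplus lam g p Q a b n i =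
      ((1 - del) * (\<Sum>m=0..a-1. Qplus lam g p Q a b m * (\<Sum>j=m..a-1. ecoef g j m * g (i - j)))
       + (pplus_tot lam g p Q a b i + Qplus lam g p Q a b i)) * kcoef lam g s i n"
    unfolding Ee_def[symmetric] R1 R2 R3 L CC by (rule fin_alg)
qed

end
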